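(* Let $L$ be the graph obtained from the line graph $L(K_{5,6})$ of the complete bipartite graph $K_{5,6}$ by adding, for every edge $uv$ of $L(K_{5,6})$, a new vertex adjacent exactly to $u$ and $v$. Let $L\overline{L}$ be the disjoint union of $L$ and its complement $\overline L$. Then $L\overline{L}$ is $\cap$-triangle.
   Context: A graph $G$ is triangle if for every maximal stable set $S$ of $G$ and every edge $uv$ of $G$ with $u,v\notin S$, there is $s\in S$ adjacent to both $u$ and $v$. A graph is $\cap$-triangle if both it and its complement are triangle. *)

theory Defs
  imports Main
begin

text \<open>A (simple) graph is given by a vertex set V and an adjacency relation E
  (symmetric, irreflexive, supported on V).\<close>

definition stable_set :: "'a set \<Rightarrow> ('a \<Rightarrow> 'a \<Rightarrow> bool) \<Rightarrow> 'a set \<Rightarrow> bool" where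
  "stable_set V E S \<longleftrightarrow> S \<subseteq> V \<and> (\<forall>x\<in>S. \<forall>y\<in>S. \<not> E x y)"

definition maximal_stable_set :: "'a set \<Rightarrow> ('a \<Rightarrow> 'a \<Rightarrow> bool) \<Rightarrow> 'a set \<Rightarrow> bool" where
  "maximal_stable_set V E S \<longleftrightarrow> stable_set V E S \<and>
     (\<forall>T. stable_set V E T \<and> S \<subseteq> T \<longrightarrow> T = S)"

definition triangle_graph :: "'a set \<Rightarrow> ('a \<Rightarrow> 'a \<Rightarrow> bool) \<Rightarrow> bool" where
  "triangle_graph V E \<longleftrightarrow>
     (\<forall>S. maximal_stable_set V E S \<longrightarrow>
        (\<forall>u\<in>V. \<forall>v\<in>V. E u v \<and> u \<notin> S \<and> v \<notin> S \<longrightarrow> (\<exists>s\<in>S. E s u \<and> E s v)))"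

definition compl_graph :: "'a set \<Rightarrow> ('a \<Rightarrow> 'a \<Rightarrow> bool) \<Rightarrow> 'a \<Rightarrow> 'a \<Rightarrow> bool" where
  "compl_graph V E x y \<longleftrightarrow> x \<in> V \<and> y \<in> V \<and> x \<noteq> y \<and> \<not> E x y"

definition cap_triangle :: "'a set \<Rightarrow> ('a \<Rightarrow> 'a \<Rightarrow> bool) \<Rightarrow> bool" where
  "cap_triangle V E \<longleftrightarrow> triangle_graph V E \<and> triangle_graph V (compl_graph V E)"

definition union_verts :: "'a set \<Rightarrow> 'b set \<Rightarrow> ('a + 'b) set" where
  "union_verts V1 V2 = Inl ` V1 \<union> Inr ` V2"

fun union_edges :: "('a \<Rightarrow> 'a \<Rightarrow> bool) \<Rightarrow> ('b \<Rightarrow> 'b \<Rightarrow> bool) \<Rightarrow> 'a + 'b \<Rightarrow> 'a + 'b \<Rightarrow> bool" where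
  "union_edges E1 E2 (Inl x) (Inl y) = E1 x y"
| "union_edges E1 E2 (Inr x) (Inr y) = E2 x y"
| "union_edges E1 E2 _ _ = False"

text \<open>The line graph of K_{5,6}: vertices are the edges (i,j), i<5, j<6, of K_{5,6};
  two are adjacent iff they are distinct and share an endpoint.\<close>

definition LK_verts :: "(nat \<times> nat) set" where
  "LK_verts = {0..<5} \<times> {0..<6}"

definition LK_adj :: "nat \<times> nat \<Rightarrow> nat \<times> nat \<Rightarrow> bool" where
  "LK_adj u v \<longleftrightarrow> u \<in> LK_verts \<and> v \<in> LK_verts \<and> u \<noteq> v \<and>
     (fst u = fst v \<or> snd u = snd v)"

text \<open>The graph L: a vertex of L(K_{5,6}) or a new vertex for each edge {u,v}
  of L(K_{5,6}) (identified with that 2-set), adjacent exactly to u and v.\<close>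

datatype Lvert = Old "nat \<times> nat" | New "(nat \<times> nat) set"

definition L_verts :: "Lvert set" where
  "L_verts = Old ` LK_verts \<union> {New {u, v} | u v. LK_adj u v}"

fun L_adj :: "Lvert \<Rightarrow> Lvert \<Rightarrow> bool" where
  "L_adj (Old u) (Old v) = LK_adj u v"
| "L_adj (Old u) (New e) = (New e \<in> L_verts \<and> u \<in> e)"
| "L_adj (New e) (Old u) = (New e \<in> L_verts \<and> u \<in> e)"
| "L_adj (New e) (New f) = False"

definition LLbar_verts :: "(Lvert + Lvert) set" where
  "LLbar_verts = union_verts L_verts L_verts"

definition LLbar_adj :: "Lvert + Lvert \<Rightarrow> Lvert + Lvert \<Rightarrow> bool" where
  "LLbar_adj = union_edges L_adj (compl_graph L_verts L_adj)"

end

theory Submission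
  imports Defs
begin

lemma maxstab_ext:
  assumes "maximal_stable_set V E S" "w \<in> V" "w \<notin> S" "\<not> E w w" "\<forall>x y. E x y \<longrightarrow> E y x"
  shows "\<exists>s\<in>S. E s w"
proof (rule ccontr)
  assume "\<not> ?thesis"
  then have "stable_set V E (insert w S)" using assms unfolding maximal_stable_set_def stable_set_def by blast
  then have "insert w S = S" using assms(1) unfolding maximal_stable_set_def by blast
  then show False using assms(3) by blast
qed

lemma union_triangle:
  assumes t1: "triangle_graph V1 E1" and t2: "triangle_graph V2 E2"
  shows "triangle_graph (union_verts V1 V2) (union_edges E1 E2)"
  unfolding triangle_graph_def
proof (intro allI impI ballI)
  fix S u v assume S: "maximal_stable_set (union_verts V1 V2) (union_edges E1 E2) S"
    and u: "u \<in> union_verts V1 V2" and v: "v \<in> union_verts V1 V2"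
    and e: "union_edges E1 E2 u v \<and> u \<notin> S \<and> v \<notin> S"
  define S1 where "S1 = {a. Inl a \<in> S}"
  define S2 where "S2 = {a. Inr a \<in> S}"
  have m1: "maximal_stable_set V1 E1 S1"
    unfolding maximal_stable_set_def
  proof (intro conjI allI impI)
    show "stable_set V1 E1 S1" using S unfolding S1_def maximal_stable_set_def stable_set_def union_verts_def by force
    fix T assume T: "stable_set V1 E1 T \<and> S1 \<subseteq> T"
    let ?T = "Inl ` T \<union> {x\<in>S. \<exists>b. x = Inr b}"
    have "stable_set (union_verts V1 V2) (union_edges E1 E2) ?T"
      unfolding stable_set_def
    proof (intro conjI ballI)
      show "?T \<subseteq> union_verts V1 V2" using S T unfolding maximal_stable_set_def stable_set_def union_verts_def by blast
      fix x y assume x: "x \<in> ?T" and y: "y \<in> ?T"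
      have sS: "\<forall>x\<in>S. \<forall>y\<in>S. \<not> union_edges E1 E2 x y" using S unfolding maximal_stable_set_def stable_set_def by blast
      have sT: "\<forall>x\<in>T. \<forall>y\<in>T. \<not> E1 x y" using T unfolding stable_set_def by blast
      show "\<not> union_edges E1 E2 x y"
        using x y sS sT by (cases x; cases y; force)
    qed
    moreover have "S \<subseteq> ?T"
    proof
      fix x assume "x \<in> S" then show "x \<in> ?T" using T unfolding S1_def by (cases x) auto
    qed
    ultimately have "?T = S" using S unfolding maximal_stable_set_def by blast
    then have "T \<subseteq> S1" unfolding S1_def by blast
    then show "T = S1" using T by blast
  qed
  have m2: "maximal_stable_set V2 E2 S2"
    unfolding maximal_stable_set_def
  proof (intro conjI allI impI)
    show "stable_set V2 E2 S2" using S unfolding S2_def maximal_stable_set_def stable_set_def union_verts_def by force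
    fix T assume T: "stable_set V2 E2 T \<and> S2 \<subseteq> T"
    let ?T = "Inr ` T \<union> {x\<in>S. \<exists>b. x = Inl b}"
    have "stable_set (union_verts V1 V2) (union_edges E1 E2) ?T"
      unfolding stable_set_def
    proof (intro conjI ballI)
      show "?T \<subseteq> union_verts V1 V2" using S T unfolding maximal_stable_set_def stable_set_def union_verts_def by blast
      fix x y assume x: "x \<in> ?T" and y: "y \<in> ?T"
      have sS: "\<forall>x\<in>S. \<forall>y\<in>S. \<not> union_edges E1 E2 x y" using S unfolding maximal_stable_set_def stable_set_def by blast
      have sT: "\<forall>x\<in>T. \<forall>y\<in>T. \<not> E2 x y" using T unfolding stable_set_def by blast
      show "\<not> union_edges E1 E2 x y"
        using x y sS sT by (cases x; cases y; force)
    qed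
    moreover have "S \<subseteq> ?T"
    proof
      fix x assume "x \<in> S" then show "x \<in> ?T" using T unfolding S2_def by (cases x) auto
    qed
    ultimately have "?T = S" using S unfolding maximal_stable_set_def by blast
    then have "T \<subseteq> S2" unfolding S2_def by blast
    then show "T = S2" using T by blast
  qed
  show "\<exists>s\<in>S. union_edges E1 E2 s u \<and> union_edges E1 E2 s v"
  proof (cases u; cases v)
    fix a b assume [simp]: "u = Inl a" "v = Inl b"
    have "a \<in> V1" "b \<in> V1" using u v unfolding union_verts_def by auto
    then obtain s where "s \<in> S1" "E1 s a" "E1 s b" using t1 m1 e unfolding triangle_graph_def S1_def by force
    then show ?thesis unfolding S1_def by force
  next
    fix a b assume [simp]: "u = Inr a" "v = Inr b"
    have "a \<in> V2" "b \<in> V2" using u v unfolding union_verts_def by auto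
    then obtain s where "s \<in> S2" "E2 s a" "E2 s b" using t2 m2 e unfolding triangle_graph_def S2_def by force
    then show ?thesis unfolding S2_def by force
  qed (use e in auto)
qed


lemma compl_sym: "(\<forall>x y. E x y \<longrightarrow> E y x) \<Longrightarrow> compl_graph V E x y \<Longrightarrow> compl_graph V E y x"
  unfolding compl_graph_def by blast

lemma join_triangle:
  assumes t1: "triangle_graph V1 (compl_graph V1 E1)" and t2: "triangle_graph V2 (compl_graph V2 E2)"
    and s1: "\<forall>x y. E1 x y \<longrightarrow> E1 y x" and s2: "\<forall>x y. E2 x y \<longrightarrow> E2 y x" and ne: "V1 \<noteq> {}"
  shows "triangle_graph (union_verts V1 V2) (compl_graph (union_verts V1 V2) (union_edges E1 E2))"
  unfolding triangle_graph_def
proof (intro allI impI ballI)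
  let ?W = "union_verts V1 V2" and ?F = "union_edges E1 E2"
  let ?C = "compl_graph ?W ?F"
  have C1: "?C (Inl a) (Inl b) \<longleftrightarrow> compl_graph V1 E1 a b" for a b
    unfolding compl_graph_def union_verts_def by auto
  have C2: "?C (Inr a) (Inr b) \<longleftrightarrow> compl_graph V2 E2 a b" for a b
    unfolding compl_graph_def union_verts_def by auto
  have C12: "?C (Inl a) (Inr b) \<longleftrightarrow> a \<in> V1 \<and> b \<in> V2" for a b
    unfolding compl_graph_def union_verts_def by auto
  have C21: "?C (Inr a) (Inl b) \<longleftrightarrow> a \<in> V2 \<and> b \<in> V1" for a b
    unfolding compl_graph_def union_verts_def by auto
  fix S u v assume S: "maximal_stable_set ?W ?C S"
    and u: "u \<in> ?W" and v: "v \<in> ?W" and e: "?C u v \<and> u \<notin> S \<and> v \<notin> S"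
  have SW: "S \<subseteq> ?W" using S unfolding maximal_stable_set_def stable_set_def by blast
  have k1: "\<forall>x\<in>S. \<forall>y\<in>S. \<not> ?C x y" using S unfolding maximal_stable_set_def stable_set_def by blast
  have k2: "S \<noteq> {}"
  proof
    assume "S = {}"
    obtain w where w: "w \<in> V1" using ne by blast
    have "stable_set ?W ?C {Inl w}" using w unfolding stable_set_def compl_graph_def union_verts_def by auto
    then have "{Inl w} = S" using S \<open>S = {}\<close> unfolding maximal_stable_set_def by blast
    then show False using \<open>S = {}\<close> by blast
  qed
  have k3: "S \<subseteq> range Inl \<or> S \<subseteq> range Inr"
  proof (rule ccontr)
    assume "\<not> ?thesis"
    then obtain a b where "Inl a \<in> S" "Inr b \<in> S"
      by (metis (no_types, opaque_lifting) UNIV_I image_eqI obj_sumE subsetI)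
    moreover have "a \<in> V1" "b \<in> V2" using calculation SW unfolding union_verts_def by auto
    ultimately show False using k1 C12 by blast
  qed
  show "\<exists>s\<in>S. ?C s u \<and> ?C s v"
    using k3
  proof
    assume SL: "S \<subseteq> range Inl"
    define S1 where "S1 = {a. Inl a \<in> S}"
    have SS1: "S = Inl ` S1" using SL unfolding S1_def by auto
    have m1: "maximal_stable_set V1 (compl_graph V1 E1) S1"
      unfolding maximal_stable_set_def
    proof (intro conjI allI impI)
      show "stable_set V1 (compl_graph V1 E1) S1"
        unfolding stable_set_def
      proof (intro conjI ballI)
        show "S1 \<subseteq> V1" using SW unfolding S1_def union_verts_def by auto
        fix x y assume "x \<in> S1" "y \<in> S1" then show "\<not> compl_graph V1 E1 x y"
          using k1 C1 unfolding S1_def by blast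
      qed
      fix T assume T: "stable_set V1 (compl_graph V1 E1) T \<and> S1 \<subseteq> T"
      have "stable_set ?W ?C (Inl ` T)"
        using T C1 unfolding stable_set_def union_verts_def by auto
      moreover have "S \<subseteq> Inl ` T" using SS1 T by blast
      ultimately have "Inl ` T = S" using S unfolding maximal_stable_set_def by blast
      then show "T = S1" unfolding S1_def by auto
    qed
    have ext: "\<exists>s\<in>S1. compl_graph V1 E1 s a" if "a \<in> V1" "a \<notin> S1" for a
      by (rule maxstab_ext[OF m1 that]) (use s1 in \<open>auto simp: compl_graph_def\<close>)
    show ?thesis
    proof (cases u; cases v)
      fix a b assume [simp]: "u = Inl a" "v = Inl b"
      have "compl_graph V1 E1 a b" "a \<notin> S1" "b \<notin> S1" "a \<in> V1" "b \<in> V1"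
        using e C1 u v unfolding S1_def union_verts_def by auto
      then obtain s where "s \<in> S1" "compl_graph V1 E1 s a" "compl_graph V1 E1 s b"
        using t1 m1 unfolding triangle_graph_def by blast
      then show ?thesis using C1 unfolding S1_def by auto
    next
      fix a b assume [simp]: "u = Inl a" "v = Inr b"
      have "a \<notin> S1" "a \<in> V1" "b \<in> V2" using e u v unfolding S1_def union_verts_def by auto
      then obtain s where s: "s \<in> S1" "compl_graph V1 E1 s a" using ext by blast
      then have "s \<in> V1" by (simp add: compl_graph_def)
      then show ?thesis using s C1 C12 \<open>b \<in> V2\<close> unfolding S1_def by (intro bexI[of _ "Inl s"]) auto
    next
      fix a b assume [simp]: "u = Inr a" "v = Inl b"
      have "b \<notin> S1" "b \<in> V1" "a \<in> V2" using e u v unfolding S1_def union_verts_def by auto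
      then obtain s where s: "s \<in> S1" "compl_graph V1 E1 s b" using ext by blast
      then have "s \<in> V1" by (simp add: compl_graph_def)
      then show ?thesis using s C1 C12 \<open>a \<in> V2\<close> unfolding S1_def by (intro bexI[of _ "Inl s"]) auto
    next
      fix a b assume [simp]: "u = Inr a" "v = Inr b"
      have "a \<in> V2" "b \<in> V2" using u v unfolding union_verts_def by auto
      obtain s where "s \<in> S1" using k2 SS1 by blast
      have "s \<in> V1" using \<open>s \<in> S1\<close> SW unfolding S1_def union_verts_def by auto
      then show ?thesis using \<open>s \<in> S1\<close> C12 \<open>a \<in> V2\<close> \<open>b \<in> V2\<close> unfolding S1_def by auto
    qed
  next
    assume SR: "S \<subseteq> range Inr"
    define S2 where "S2 = {a. Inr a \<in> S}"
    have SS2: "S = Inr ` S2" using SR unfolding S2_def by auto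
    have m2: "maximal_stable_set V2 (compl_graph V2 E2) S2"
      unfolding maximal_stable_set_def
    proof (intro conjI allI impI)
      show "stable_set V2 (compl_graph V2 E2) S2"
        unfolding stable_set_def
      proof (intro conjI ballI)
        show "S2 \<subseteq> V2" using SW unfolding S2_def union_verts_def by auto
        fix x y assume "x \<in> S2" "y \<in> S2" then show "\<not> compl_graph V2 E2 x y"
          using k1 C2 unfolding S2_def by blast
      qed
      fix T assume T: "stable_set V2 (compl_graph V2 E2) T \<and> S2 \<subseteq> T"
      have "stable_set ?W ?C (Inr ` T)"
        using T C2 unfolding stable_set_def union_verts_def by auto
      moreover have "S \<subseteq> Inr ` T" using SS2 T by blast
      ultimately have "Inr ` T = S" using S unfolding maximal_stable_set_def by blast
      then show "T = S2" unfolding S2_def by auto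
    qed
    have ext: "\<exists>s\<in>S2. compl_graph V2 E2 s a" if "a \<in> V2" "a \<notin> S2" for a
      by (rule maxstab_ext[OF m2 that]) (use s2 in \<open>auto simp: compl_graph_def\<close>)
    show ?thesis
    proof (cases u; cases v)
      fix a b assume [simp]: "u = Inr a" "v = Inr b"
      have "compl_graph V2 E2 a b" "a \<notin> S2" "b \<notin> S2" "a \<in> V2" "b \<in> V2"
        using e C2 u v unfolding S2_def union_verts_def by auto
      then obtain s where "s \<in> S2" "compl_graph V2 E2 s a" "compl_graph V2 E2 s b"
        using t2 m2 unfolding triangle_graph_def by blast
      then show ?thesis using C2 unfolding S2_def by auto
    next
      fix a b assume [simp]: "u = Inr a" "v = Inl b"
      have "a \<notin> S2" "a \<in> V2" "b \<in> V1" using e u v unfolding S2_def union_verts_def by auto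
      then obtain s where s: "s \<in> S2" "compl_graph V2 E2 s a" using ext by blast
      then have "s \<in> V2" by (simp add: compl_graph_def)
      then show ?thesis using s C2 C21 \<open>b \<in> V1\<close> unfolding S2_def by (intro bexI[of _ "Inr s"]) auto
    next
      fix a b assume [simp]: "u = Inl a" "v = Inr b"
      have "b \<notin> S2" "b \<in> V2" "a \<in> V1" using e u v unfolding S2_def union_verts_def by auto
      then obtain s where s: "s \<in> S2" "compl_graph V2 E2 s b" using ext by blast
      then have "s \<in> V2" by (simp add: compl_graph_def)
      then show ?thesis using s C2 C21 \<open>a \<in> V1\<close> unfolding S2_def by (intro bexI[of _ "Inr s"]) auto
    next
      fix a b assume [simp]: "u = Inl a" "v = Inl b"
      have "a \<in> V1" "b \<in> V1" using u v unfolding union_verts_def by auto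
      obtain s where "s \<in> S2" using k2 SS2 by blast
      have "s \<in> V2" using \<open>s \<in> S2\<close> SW unfolding S2_def union_verts_def by auto
      then show ?thesis using \<open>s \<in> S2\<close> C21 \<open>a \<in> V1\<close> \<open>b \<in> V1\<close> unfolding S2_def by auto
    qed
  qed
qed


lemma pick6: "\<exists>b<(6::nat). b \<notin> {c1,c2,d1,d2}"
proof (rule ccontr)
  assume "\<not> ?thesis" then have "{0..<6} \<subseteq> set [c1,c2,d1,d2]" by auto
  then have "card {0..<6::nat} \<le> card (set [c1,c2,d1,d2])" by (rule card_mono[rotated]) simp
  also have "\<dots> \<le> 4" using card_length[of "[c1,c2,d1,d2]"] by simp
  finally show False by simp
qed
lemma pick5: "\<exists>b<(5::nat). b \<notin> {c1,c2,d1,d2}"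
proof (rule ccontr)
  assume "\<not> ?thesis" then have "{0..<5} \<subseteq> set [c1,c2,d1,d2]" by auto
  then have "card {0..<5::nat} \<le> card (set [c1,c2,d1,d2])" by (rule card_mono[rotated]) simp
  also have "\<dots> \<le> 4" using card_length[of "[c1,c2,d1,d2]"] by simp
  finally show False by simp
qed
lemma New_in: "New e \<in> L_verts \<longleftrightarrow> (\<exists>a b. e = {a,b} \<and> LK_adj a b)" by (auto simp: L_verts_def)
lemma Old_in: "Old u \<in> L_verts \<longleftrightarrow> u \<in> LK_verts" by (auto simp: L_verts_def)
lemma LK_sym: "LK_adj a b \<Longrightarrow> LK_adj b a" unfolding LK_adj_def by auto
lemma L_sym: "\<forall>x y. L_adj x y \<longrightarrow> L_adj y x"
proof (intro allI) fix x y show "L_adj x y \<longrightarrow> L_adj y x" by (cases x; cases y) (auto intro: LK_sym) qed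
lemma L_sym': "L_adj x y \<Longrightarrow> L_adj y x" using L_sym by blast
lemma L_irr: "\<not> L_adj x x" by (cases x) (auto simp: LK_adj_def)
lemma L_supp: "L_adj x y \<Longrightarrow> x \<in> L_verts \<and> y \<in> L_verts"
  by (cases x; cases y) (auto simp: Old_in New_in LK_adj_def)
lemma compl_compl: "compl_graph L_verts (compl_graph L_verts L_adj) = L_adj"
  using L_supp L_irr by (auto simp: compl_graph_def fun_eq_iff)
lemma rowbad: "x \<in> L_verts \<Longrightarrow> (\<forall>b<6. Old (i,b) \<noteq> x) \<Longrightarrow> \<exists>c1 c2. \<forall>b. L_adj (Old (i,b)) x \<longrightarrow> b = c1 \<or> b = c2"
proof (cases x)
  case (Old pq)
  assume x: "x \<in> L_verts" "\<forall>b<6. Old (i,b) \<noteq> x"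
  obtain p q where pq: "pq = (p,q)" by force
  have "p < 5" "q < 6" using x Old pq by (auto simp: Old_in LK_verts_def)
  then have "p \<noteq> i" using x Old pq by auto
  then show ?thesis using Old pq by (auto simp: LK_adj_def)
next
  case (New f)
  assume x: "x \<in> L_verts" "\<forall>b<6. Old (i,b) \<noteq> x"
  then obtain p q where "f = {p,q}" using New New_in by auto
  then show ?thesis using New by (intro exI[of _ "snd p"] exI[of _ "snd q"]) auto
qed
lemma colbad: "x \<in> L_verts \<Longrightarrow> (\<forall>a<5. Old (a,j) \<noteq> x) \<Longrightarrow> \<exists>c1 c2. \<forall>a. L_adj (Old (a,j)) x \<longrightarrow> a = c1 \<or> a = c2"
proof (cases x)
  case (Old pq)
  assume x: "x \<in> L_verts" "\<forall>a<5. Old (a,j) \<noteq> x"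
  obtain p q where pq: "pq = (p,q)" by force
  have "p < 5" "q < 6" using x Old pq by (auto simp: Old_in LK_verts_def)
  then have "q \<noteq> j" using x Old pq by auto
  then show ?thesis using Old pq by (auto simp: LK_adj_def)
next
  case (New f)
  assume x: "x \<in> L_verts" "\<forall>a<5. Old (a,j) \<noteq> x"
  then obtain p q where "f = {p,q}" using New New_in by auto
  then show ?thesis using New by (intro exI[of _ "fst p"] exI[of _ "fst q"]) auto
qed
lemma L_tri: "triangle_graph L_verts L_adj"
  unfolding triangle_graph_def
proof (intro allI impI ballI)
  fix S u v assume S: "maximal_stable_set L_verts L_adj S" and u: "u \<in> L_verts" and v: "v \<in> L_verts"
    and e: "L_adj u v \<and> u \<notin> S \<and> v \<notin> S"
  have ext: "\<exists>s\<in>S. L_adj s w" if "w \<in> L_verts" "w \<notin> S" for w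
    using maxstab_ext[OF S that L_irr L_sym] .
  have oldnew: "\<exists>s\<in>S. L_adj s (Old a) \<and> L_adj s (New f)"
    if h: "L_adj (Old a) (New f)" "Old a \<notin> S" "New f \<notin> S" for a f
  proof -
    from h obtain p q where f: "f = {p,q}" "LK_adj p q" "a \<in> f" using New_in by auto
    obtain s where s: "s \<in> S" "L_adj s (New f)" using ext[of "New f"] h(1,3) L_supp by blast
    then obtain c where c: "s = Old c" "c \<in> f" by (cases s) auto
    have "c \<noteq> a" using c s h(2) by auto
    have "LK_adj q p" using f LK_sym by blast
    then have "LK_adj c a" using f c \<open>c \<noteq> a\<close> by auto
    then show ?thesis using s c by (intro bexI[of _ "Old c"]) simp_all
  qed
  show "\<exists>s\<in>S. L_adj s u \<and> L_adj s v"
  proof (cases u; cases v)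
    fix a b assume [simp]: "u = Old a" "v = Old b"
    have ab: "LK_adj a b" using e by simp
    let ?N = "New {a,b}"
    have N: "?N \<in> L_verts" using ab New_in by blast
    show ?thesis
    proof (cases "?N \<in> S")
      case True then show ?thesis using N by (intro bexI[of _ ?N]) auto
    next
      case False
      then obtain s where "s \<in> S" "L_adj s ?N" using ext N by blast
      then have "s = Old a \<or> s = Old b" by (cases s) auto
      then show ?thesis using e \<open>s \<in> S\<close> by auto
    qed
  next
    fix a f assume [simp]: "u = Old a" "v = New f"
    show ?thesis using oldnew[of a f] e by simp
  next
    fix f a assume [simp]: "u = New f" "v = Old a"
    have "L_adj (Old a) (New f)" using e L_sym' by simp
    then show ?thesis using oldnew[of a f] e by auto
  qed (use e in auto)
qed

lemma Lbar_tri: "triangle_graph L_verts (compl_graph L_verts L_adj)"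
  unfolding triangle_graph_def
proof (intro allI impI ballI)
  let ?C = "compl_graph L_verts L_adj"
  fix S u v assume S: "maximal_stable_set L_verts ?C S" and u: "u \<in> L_verts" and v: "v \<in> L_verts"
    and e: "?C u v \<and> u \<notin> S \<and> v \<notin> S"
  have SV: "S \<subseteq> L_verts" using S unfolding maximal_stable_set_def stable_set_def by blast
  have cl: "L_adj x y" if "x \<in> S" "y \<in> S" "x \<noteq> y" for x y
    using S SV that unfolding maximal_stable_set_def stable_set_def compl_graph_def by blast
  have add: "w \<in> S" if "w \<in> L_verts" "\<forall>x\<in>S. x \<noteq> w \<longrightarrow> L_adj x w" for w
  proof -
    have "stable_set L_verts ?C (insert w S)"
      unfolding stable_set_def
    proof (intro conjI ballI)
      show "insert w S \<subseteq> L_verts" using that SV by blast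
      fix x y assume "x \<in> insert w S" "y \<in> insert w S"
      show "\<not> ?C x y"
      proof
        assume "?C x y"
        then have xy: "x \<noteq> y" "\<not> L_adj x y" by (simp_all add: compl_graph_def)
        show False using \<open>x \<in> insert w S\<close> \<open>y \<in> insert w S\<close> xy that cl L_sym' by (auto dest: L_sym')
      qed
    qed
    then have "insert w S = S" using S unfolding maximal_stable_set_def by blast
    then show ?thesis by blast
  qed
  have suff: "\<exists>s\<in>S. ?C s u \<and> ?C s v" if "s \<in> S" "\<not> L_adj s u" "\<not> L_adj s v" for s
    using that SV e u v unfolding compl_graph_def by blast
  show "\<exists>s\<in>S. ?C s u \<and> ?C s v"
  proof (cases "\<exists>f. New f \<in> S")
    case True
    then obtain f where f: "New f \<in> S" by blast
    then obtain a b where ab: "f = {a,b}" "LK_adj a b" using SV New_in by blast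
    have oa: "Old a \<in> S" if "f = {a,b}" "LK_adj a b" for a b
    proof (rule add)
      show "Old a \<in> L_verts" using that(2) by (simp add: Old_in LK_adj_def)
      show "\<forall>x\<in>S. x \<noteq> Old a \<longrightarrow> L_adj x (Old a)"
      proof (intro ballI impI)
        fix x assume x: "x \<in> S" "x \<noteq> Old a"
        show "L_adj x (Old a)"
        proof (cases "x = New f")
          case True then show ?thesis using f SV that by auto
        next
          case False
          then have "L_adj x (New f)" using cl x f by blast
          then obtain c where c: "x = Old c" "c \<in> f" by (cases x) auto
          then have "c = b" using x that by auto
          then show ?thesis using c that LK_sym by auto
        qed
      qed
    qed
    have "Old a \<in> S" "Old b \<in> S" using oa[OF ab] oa[of b a] ab LK_sym by (auto simp: insert_commute)
    moreover have "\<not> L_adj (New f) w" if "w \<notin> S" for w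
      using that calculation ab by (cases w) auto
    ultimately show ?thesis using suff[OF f] e by blast
  next
    case False
    then have allold: "\<forall>x\<in>S. \<exists>c. x = Old c" by (metis Lvert.exhaust)
    have "S \<noteq> {}"
    proof
      assume "S = {}"
      moreover have "Old (0,0) \<in> L_verts" by (simp add: Old_in LK_verts_def)
      ultimately show False using add by blast
    qed
    then obtain i j where ij0: "Old (i,j) \<in> S" using allold by fastforce
    have ij: "i < 5" "j < 6" using ij0 SV by (auto simp: Old_in LK_verts_def)
    have rowcol: "(\<forall>b<6. Old (i,b) \<in> S) \<or> (\<forall>a<5. Old (a,j) \<in> S)"
    proof (rule ccontr)
      assume "\<not> ?thesis"
      then obtain b a where b: "b < 6" "Old (i,b) \<notin> S" and a: "a < 5" "Old (a,j) \<notin> S" by auto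
      have "Old (i,b) \<in> L_verts" using b ij by (simp add: Old_in LK_verts_def)
      then obtain x where x: "x \<in> S" "x \<noteq> Old (i,b)" "\<not> L_adj x (Old (i,b))" using add b by blast
      then obtain p q where pq: "x = Old (p,q)" using allold by fastforce
      have pqv: "(p,q) \<in> LK_verts" using x pq SV by (auto simp: Old_in)
      have "p \<noteq> i" using x pq pqv \<open>Old (i,b) \<in> L_verts\<close> by (auto simp: LK_adj_def Old_in)
      then have "L_adj x (Old (i,j))" using cl x ij0 pq by blast
      then have "q = j" using pq \<open>p \<noteq> i\<close> by (auto simp: LK_adj_def)
      have "Old (a,j) \<in> L_verts" using a ij by (simp add: Old_in LK_verts_def)
      then obtain y where y: "y \<in> S" "y \<noteq> Old (a,j)" "\<not> L_adj y (Old (a,j))" using add a by blast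
      then obtain p' q' where pq': "y = Old (p',q')" using allold by fastforce
      have pqv': "(p',q') \<in> LK_verts" using y pq' SV by (auto simp: Old_in)
      have "q' \<noteq> j" using y pq' pqv' \<open>Old (a,j) \<in> L_verts\<close> by (auto simp: LK_adj_def Old_in)
      then have "L_adj y (Old (i,j))" using cl y ij0 pq' by blast
      then have "p' = i" using pq' \<open>q' \<noteq> j\<close> by (auto simp: LK_adj_def)
      have "L_adj x y" using cl x y pq pq' \<open>p \<noteq> i\<close> \<open>p' = i\<close> by blast
      then show False using pq pq' \<open>p \<noteq> i\<close> \<open>p' = i\<close> \<open>q = j\<close> \<open>q' \<noteq> j\<close> by (auto simp: LK_adj_def)
    qed
    then show ?thesis
    proof
      assume R: "\<forall>b<6. Old (i,b) \<in> S"
      obtain c1 c2 where c: "\<forall>b. L_adj (Old (i,b)) u \<longrightarrow> b = c1 \<or> b = c2"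
        using rowbad[OF u] R e by metis
      obtain d1 d2 where d: "\<forall>b. L_adj (Old (i,b)) v \<longrightarrow> b = d1 \<or> b = d2"
        using rowbad[OF v] R e by metis
      obtain b where "b < 6" "b \<notin> {c1,c2,d1,d2}" using pick6 by blast
      then show ?thesis using suff[of "Old (i,b)"] R c d by auto
    next
      assume R: "\<forall>a<5. Old (a,j) \<in> S"
      obtain c1 c2 where c: "\<forall>a. L_adj (Old (a,j)) u \<longrightarrow> a = c1 \<or> a = c2"
        using colbad[OF u] R e by metis
      obtain d1 d2 where d: "\<forall>a. L_adj (Old (a,j)) v \<longrightarrow> a = d1 \<or> a = d2"
        using colbad[OF v] R e by metis
      obtain a where "a < 5" "a \<notin> {c1,c2,d1,d2}" using pick5 by blast
      then show ?thesis using suff[of "Old (a,j)"] R c d by auto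
    qed
  qed
qed

theorem proposition39:
  shows "cap_triangle LLbar_verts LLbar_adj"
proof -
  have sym2: "\<forall>x y. compl_graph L_verts L_adj x y \<longrightarrow> compl_graph L_verts L_adj y x"
    using L_sym unfolding compl_graph_def by blast
  have ne: "L_verts \<noteq> {}" using Old_in[of "(0,0)"] by (auto simp: LK_verts_def)
  have t1: "triangle_graph LLbar_verts LLbar_adj"
    unfolding LLbar_verts_def LLbar_adj_def by (rule union_triangle[OF L_tri Lbar_tri])
  have t2: "triangle_graph LLbar_verts (compl_graph LLbar_verts LLbar_adj)"
    unfolding LLbar_verts_def LLbar_adj_def
    by (rule join_triangle[OF Lbar_tri _ L_sym sym2 ne]) (simp add: compl_compl L_tri)
  show ?thesis unfolding cap_triangle_def using t1 t2 by blast
qed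

end
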